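(* Let $n\ge 1$, let $\rho\in(0,1)$, $\alpha\ge 0$, and let $F:\mathbb{R}^n\to\mathbb{R}^n$ be $\rho$-Lipschitz (Euclidean norm). Assume there exist a symmetric positive semidefinite matrix $G\in\mathbb{R}^{n\times n}$ with $G\preccurlyeq \rho I$ and an $\alpha$-Lipschitz map $\xi:\mathbb{R}^n\to\mathbb{R}^n$ such that $F(x)=Gx+\xi(x)$ for all $x$. Let $C\ge 1$, let $k\ge 1$ be an integer, let $x_0\in\mathbb{R}^n$, and let $x_e$ be the output of the Constrained Anderson Acceleration procedure (described in the context) started at $x_0$ with parameters $C$ and $k$. Then $$\|F(x_e)-x_e\|\le\Big(\max_{x\in[0,\rho]}|p_*(x)|+3C\alpha k\Big)\|F(x_0)-x_0\|,$$ where $p_*$ is any minimizer of $\max_{x\in[0,\rho]}|p(x)|$ over all $p\in\mathbb{R}_k[X]$ with $p(1)=1$ and $\|p\|_1\le C$.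
   Context: $\|\cdot\|$ denotes the Euclidean norm on $\mathbb{R}^n$. $\mathbb{R}_k[X]$ is the space of real polynomials of degree at most $k$, and for $p=\sum_{i=0}^k p_iX^i$, $\|p\|_1=\sum_{i=0}^k|p_i|$ (the $\ell_1$ norm of the coefficient vector); for a vector $c$, $\|c\|_1=\sum_i|c_i|$. Constrained Anderson Acceleration (CAA) with input $x_0$, constraint bound $C$ and integer $k$: set $x_{i+1}=F(x_i)$ for $i=0,\dots,k$; form the matrix $R=[x_0-x_1,\ x_1-x_2,\ \dots,\ x_k-x_{k+1}]\in\mathbb{R}^{n\times(k+1)}$; compute $\tilde c\in\arg\min\{\|Rc\| : c\in\mathbb{R}^{k+1},\ \mathbf{1}^Tc=1,\ \|c\|_1\le C\}$; output $x_e=\sum_{i=0}^k\tilde c_i x_i$. *)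

theory Defs
  imports "HOL-Analysis.Analysis" "HOL-Computational_Algebra.Polynomial"
begin

definition caa_iter :: "('a \<Rightarrow> 'a) \<Rightarrow> 'a \<Rightarrow> nat \<Rightarrow> 'a" where
  "caa_iter F x0 i = (F ^^ i) x0"

definition caa_residual :: "('a::real_vector \<Rightarrow> 'a) \<Rightarrow> 'a \<Rightarrow> nat \<Rightarrow> (nat \<Rightarrow> real) \<Rightarrow> 'a" where
  "caa_residual F x0 k c = (\<Sum>i\<le>k. c i *\<^sub>R (caa_iter F x0 i - caa_iter F x0 (Suc i)))"

definition caa_feasible :: "real \<Rightarrow> nat \<Rightarrow> (nat \<Rightarrow> real) \<Rightarrow> bool" where
  "caa_feasible C k c \<longleftrightarrow> (\<Sum>i\<le>k. c i) = 1 \<and> (\<Sum>i\<le>k. \<bar>c i\<bar>) \<le> C"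

definition caa_argmin :: "('a::real_normed_vector \<Rightarrow> 'a) \<Rightarrow> 'a \<Rightarrow> real \<Rightarrow> nat \<Rightarrow> (nat \<Rightarrow> real) \<Rightarrow> bool" where
  "caa_argmin F x0 C k c \<longleftrightarrow> caa_feasible C k c \<and>
     (\<forall>c'. caa_feasible C k c' \<longrightarrow> norm (caa_residual F x0 k c) \<le> norm (caa_residual F x0 k c'))"

definition caa_output :: "('a::real_vector \<Rightarrow> 'a) \<Rightarrow> 'a \<Rightarrow> nat \<Rightarrow> (nat \<Rightarrow> real) \<Rightarrow> 'a" where
  "caa_output F x0 k c = (\<Sum>i\<le>k. c i *\<^sub>R caa_iter F x0 i)"

definition poly_l1 :: "real poly \<Rightarrow> real" where
  "poly_l1 p = (\<Sum>i\<le>degree p. \<bar>coeff p i\<bar>)"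

definition poly_feasible :: "real \<Rightarrow> nat \<Rightarrow> real poly \<Rightarrow> bool" where
  "poly_feasible C k p \<longleftrightarrow> degree p \<le> k \<and> poly p 1 = 1 \<and> poly_l1 p \<le> C"

text \<open>max_{x in [0,rho]} |p(x)| (attained, since continuous on a compact interval).\<close>
definition sup_on_interval :: "real \<Rightarrow> real poly \<Rightarrow> real" where
  "sup_on_interval \<rho> p = (SUP x\<in>{0..\<rho>}. \<bar>poly p x\<bar>)"

end

theory Submission
  imports Defs
begin

definition polyop :: "('a::real_vector \<Rightarrow> 'a) \<Rightarrow> real poly \<Rightarrow> 'a \<Rightarrow> 'a" where
  "polyop g p v = (\<Sum>i\<le>degree p. coeff p i *\<^sub>R (g^^i) v)"

lemma linear_funpow: fixes g :: "'a::real_vector \<Rightarrow> 'a" assumes "linear g" shows "linear (g^^i)"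
proof (induction i)
  case 0 show ?case unfolding funpow.simps(1) by (rule linear_id)
next
  case (Suc i) show ?case unfolding funpow.simps(2) by (rule linear_compose[OF Suc assms])
qed

lemma linear_polyop: assumes "linear g" shows "linear (polyop g p)"
  unfolding polyop_def
  by (intro linear_compose_sum ballI module_hom_scale linear_funpow assms)

lemma funpow_in_subspace: "subspace S \<Longrightarrow> g ` S \<subseteq> S \<Longrightarrow> v \<in> S \<Longrightarrow> (g^^i) v \<in> S"
  by (induction i) auto

lemma polyop_in_subspace: "subspace S \<Longrightarrow> g ` S \<subseteq> S \<Longrightarrow> v \<in> S \<Longrightarrow> polyop g p v \<in> S"
  unfolding polyop_def
  by (intro subspace_sum subspace_scale funpow_in_subspace) auto

lemma funpow_eigen: "linear g \<Longrightarrow> g u = l *\<^sub>R u \<Longrightarrow> (g^^i) u = (l^i) *\<^sub>R u"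
  by (induction i) (auto simp: linear_scale)

lemma polyop_eigen: assumes "linear g" "g u = l *\<^sub>R u" shows "polyop g p u = poly p l *\<^sub>R u"
  unfolding polyop_def poly_altdef scaleR_sum_left
  by (intro sum.cong refl) (simp add: funpow_eigen[OF assms])


lemma spectral_bound:
  fixes g :: "'a::euclidean_space \<Rightarrow> 'a"
  assumes lin: "linear g" and sa: "\<And>x y. g x \<bullet> y = x \<bullet> g y"
    and psd: "\<And>x. 0 \<le> x \<bullet> g x" and le: "\<And>x. x \<bullet> g x \<le> \<rho> * (x \<bullet> x)"
    and r0: "0 \<le> \<rho>" and B: "\<And>t. 0 \<le> t \<Longrightarrow> t \<le> \<rho> \<Longrightarrow> \<bar>poly p t\<bar> \<le> B"
  shows "norm (polyop g p v) \<le> B * norm v"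
proof -
  have B0: "0 \<le> B"
    using B[of 0] r0 by simp
  have main: "\<forall>S. subspace S \<and> g ` S \<subseteq> S \<and> dim S = d \<longrightarrow> (\<forall>v\<in>S. norm (polyop g p v) \<le> B * norm v)" for d
  proof (induction d rule: less_induct)
    case (less d)
    show ?case
    proof (intro allI impI ballI)
      fix S v assume H: "subspace S \<and> g ` S \<subseteq> S \<and> dim S = d" and v: "v \<in> S"
      have sS: "subspace S" and gS: "g ` S \<subseteq> S" and dS: "dim S = d" using H by auto
      show "norm (polyop g p v) \<le> B * norm v"
      proof (cases "S = {0}")
        case True
        then have "v = 0" using v by auto
        then show ?thesis using linear_0[OF linear_polyop[OF lin]] by simp
      next
        case False
        then obtain y where y: "y \<in> S" "y \<noteq> 0" using subspace_0[OF sS] by auto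
        define K where "K = S \<inter> sphere 0 1"
        have "y /\<^sub>R norm y \<in> K" using y sS unfolding K_def
          by (auto simp: subspace_scale)
        then have Kne: "K \<noteq> {}" by auto
        have Kc: "compact K" unfolding K_def
          by (intro closed_Int_compact closed_subspace sS compact_sphere)
        have "continuous_on K (\<lambda>x. x \<bullet> g x)"
          using lin linear_conv_bounded_linear[of g]
          by (intro continuous_intros linear_continuous_on) auto
        then obtain u where uK: "u \<in> K" and umax: "\<And>x. x \<in> K \<Longrightarrow> x \<bullet> g x \<le> u \<bullet> g u"
          using continuous_attains_sup[OF Kc Kne] by blast
        define l where "l = u \<bullet> g u"
        have uS: "u \<in> S" and nu: "norm u = 1" using uK unfolding K_def by auto
        have uu: "u \<bullet> u = 1" using nu by (simp add: norm_eq_1)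
        have Smax: "x \<bullet> g x \<le> l * (x \<bullet> x)" if "x \<in> S" for x
        proof (cases "x = 0")
          case True then show ?thesis by (simp add: linear_0[OF lin])
        next
          case False
          have "x /\<^sub>R norm x \<in> K" using that False sS unfolding K_def
            by (auto simp: subspace_scale)
          then have "(x /\<^sub>R norm x) \<bullet> g (x /\<^sub>R norm x) \<le> l" using umax l_def by blast
          then have "(x \<bullet> g x) / (norm x)^2 \<le> l"
            by (simp add: linear_scale[OF lin] power2_eq_square divide_inverse mult_ac)
          then show ?thesis using False
            by (simp add: pos_divide_le_eq dot_square_norm)
        qed
        have orth: "w \<bullet> g u = 0" if wS: "w \<in> S" and wu: "w \<bullet> u = 0" for w
        proof -
          define a where "a = w \<bullet> g u"
          define b where "b = w \<bullet> g w - l * (w \<bullet> w)"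
          have ineq: "2 * t * a + t^2 * b \<le> 0" for t
          proof -
            have "u + t *\<^sub>R w \<in> S" using uS wS sS by (simp add: subspace_add subspace_scale)
            from Smax[OF this] have
              "(u + t *\<^sub>R w) \<bullet> g (u + t *\<^sub>R w) \<le> l * ((u + t *\<^sub>R w) \<bullet> (u + t *\<^sub>R w))" .
            moreover have "(u + t *\<^sub>R w) \<bullet> g (u + t *\<^sub>R w) = l + 2 * t * a + t^2 * (w \<bullet> g w)"
              using sa[of u w] unfolding l_def a_def
              by (simp add: linear_add[OF lin] linear_scale[OF lin] inner_add_left inner_add_right
                  power2_eq_square algebra_simps inner_commute)
            moreover have "(u + t *\<^sub>R w) \<bullet> (u + t *\<^sub>R w) = 1 + t^2 * (w \<bullet> w)"
              using uu wu by (simp add: inner_add_left inner_add_right power2_eq_square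
                  algebra_simps inner_commute)
            ultimately show ?thesis using uu wu unfolding b_def by (simp add: algebra_simps inner_commute power2_eq_square)
          qed
          define s where "s = 1 / (\<bar>b\<bar> + 1)"
          have s0: "0 < s" unfolding s_def by simp
          have sb: "s * \<bar>b\<bar> < 1" unfolding s_def by (simp add: field_simps)
          have "a^2 * (2 + s * b) * s \<le> 0" using ineq[of "s * a"]
            by (simp add: power2_eq_square algebra_simps)
          moreover have "2 + s * b > 0"
          proof -
            have "s * (- \<bar>b\<bar>) \<le> s * b" using s0 by (intro mult_left_mono) auto
            then show ?thesis using sb by simp
          qed
          ultimately have "a^2 * ((2 + s * b) * s) \<le> 0 * ((2 + s * b) * s)" by (simp add: mult.assoc)
          moreover have "(2 + s * b) * s > 0" using s0 \<open>2 + s * b > 0\<close> by simp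
          ultimately have "a^2 \<le> 0" using mult_le_cancel_right_pos by blast
          then show ?thesis unfolding a_def by simp
        qed
        have eig: "g u = l *\<^sub>R u"
        proof -
          define z where "z = g u - l *\<^sub>R u"
          have zS: "z \<in> S" unfolding z_def using uS gS sS by (auto simp: subspace_diff subspace_scale)
          have zu: "z \<bullet> u = 0" unfolding z_def l_def using uu sa[of u u]
            by (simp add: inner_diff_left)
          have "z \<bullet> z = z \<bullet> g u - l * (z \<bullet> u)" unfolding z_def
            by (simp add: inner_diff_right inner_diff_left algebra_simps inner_commute)
          also have "\<dots> = 0" using orth[OF zS zu] zu by simp
          finally show ?thesis unfolding z_def by simp
        qed
        have l0: "0 \<le> l" unfolding l_def by (rule psd)
        have lr: "l \<le> \<rho>" using le[of u] uu unfolding l_def by simp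
        define S' where "S' = {w \<in> S. w \<bullet> u = 0}"
        have sS': "subspace S'" unfolding S'_def subspace_def
          using sS by (auto simp: subspace_0 subspace_add subspace_scale inner_add_left)
        have gS': "g ` S' \<subseteq> S'"
        proof
          fix x assume "x \<in> g ` S'"
          then obtain w where w: "w \<in> S'" "x = g w" by auto
          have "g w \<bullet> u = w \<bullet> g u" by (rule sa)
          also have "\<dots> = 0" using w(1) eig unfolding S'_def by simp
          finally show "x \<in> S'" using w gS unfolding S'_def by auto
        qed
        have "dim S' < dim S"
        proof (rule dim_psubset)
          have "u \<notin> S'" using uu unfolding S'_def by auto
          then have "S' \<subset> S" using uS unfolding S'_def by blast
          then show "span S' \<subset> span S"
            by (simp add: span_eq_iff[THEN iffD2, OF sS] span_eq_iff[THEN iffD2, OF sS'])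
        qed
        then have IH: "\<forall>v\<in>S'. norm (polyop g p v) \<le> B * norm v"
          using less.IH dS sS' gS' by blast
        define a where "a = v \<bullet> u"
        define w where "w = v - a *\<^sub>R u"
        have wS': "w \<in> S'" unfolding S'_def w_def a_def using v uS sS uu
          by (simp add: subspace_diff subspace_scale inner_diff_left)
        have vdec: "v = a *\<^sub>R u + w" unfolding w_def by simp
        have Pv: "polyop g p v = (a * poly p l) *\<^sub>R u + polyop g p w"
          unfolding vdec using linear_polyop[OF lin] polyop_eigen[OF lin eig]
          by (simp add: linear_add linear_scale)
        have Pw: "polyop g p w \<bullet> u = 0"
          using polyop_in_subspace[OF sS' gS' wS'] unfolding S'_def by simp
        have wu: "w \<bullet> u = 0" using wS' unfolding S'_def by simp
        have "(norm (polyop g p v))^2 = (a * poly p l)^2 + (norm (polyop g p w))^2"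
          unfolding Pv power2_norm_eq_inner using Pw uu
          by (simp add: inner_add_left inner_add_right power2_eq_square inner_commute)
        also have "\<dots> \<le> (B * a)^2 + (B * norm w)^2"
        proof (intro add_mono)
          have "\<bar>a * poly p l\<bar> \<le> \<bar>B * a\<bar>" using B[OF l0 lr] B0
            by (simp add: abs_mult mult_left_mono mult.commute[of B])
          then show "(a * poly p l)^2 \<le> (B * a)^2" by (simp add: abs_le_square_iff)
          have "norm (polyop g p w) \<le> B * norm w" using IH wS' by blast
          then show "(norm (polyop g p w))^2 \<le> (B * norm w)^2" by (simp add: power_mono)
        qed
        also have "\<dots> = (B * norm v)^2"
        proof -
          have nv: "(norm v)^2 = a^2 + (norm w)^2"
            unfolding vdec power2_norm_eq_inner using wu uu
            by (simp add: inner_add_left inner_add_right inner_commute power2_eq_square)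
          show ?thesis using nv by (simp add: power_mult_distrib algebra_simps)
        qed
        finally have sq: "(norm (polyop g p v))^2 \<le> (B * norm v)^2" .
        show ?thesis by (rule power2_le_imp_le[OF sq]) (simp add: B0)
      qed
    qed
  qed
  then show ?thesis using subspace_UNIV by blast
qed


lemma sum_ext_deg:
  fixes f :: "nat \<Rightarrow> 'b::comm_monoid_add"
  assumes "\<And>i. degree p < i \<Longrightarrow> f i = 0" "degree p \<le> k"
  shows "sum f {..k} = sum f {..degree p}"
  by (rule sum.mono_neutral_right) (use assms in auto)

lemma wsum_bound:
  fixes v :: "nat \<Rightarrow> 'a::real_normed_vector"
  assumes "\<And>i. i \<le> k \<Longrightarrow> norm (v i) \<le> b" "(\<Sum>i\<le>k. \<bar>c i\<bar>) \<le> C" "0 \<le> b"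
  shows "norm (\<Sum>i\<le>k. c i *\<^sub>R v i) \<le> C * b"
proof -
  have "norm (\<Sum>i\<le>k. c i *\<^sub>R v i) \<le> (\<Sum>i\<le>k. norm (c i *\<^sub>R v i))" by (rule norm_sum)
  also have "\<dots> \<le> (\<Sum>i\<le>k. \<bar>c i\<bar> * b)"
    by (intro sum_mono) (simp add: assms(1) mult_left_mono)
  also have "\<dots> = (\<Sum>i\<le>k. \<bar>c i\<bar>) * b" by (simp add: sum_distrib_right)
  also have "\<dots> \<le> C * b" using assms by (simp add: mult_right_mono)
  finally show ?thesis .
qed

theorem proposition2:
  fixes F \<xi> :: "real^'n \<Rightarrow> real^'n"
    and G :: "real^'n^'n"
    and \<rho> \<alpha> C :: real and k :: nat and x0 :: "real^'n"
    and c :: "nat \<Rightarrow> real" and p :: "real poly"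
  assumes rho: "0 < \<rho>" "\<rho> < 1"
    and alpha: "0 \<le> \<alpha>"
    and F_lip: "\<rho>-lipschitz_on UNIV F"
    and G_sym: "transpose G = G"
    and G_psd: "\<And>x. 0 \<le> x \<bullet> (G *v x)"
    and G_le: "\<And>x. x \<bullet> (G *v x) \<le> \<rho> * (x \<bullet> x)"
    and xi_lip: "\<alpha>-lipschitz_on UNIV \<xi>"
    and F_decomp: "\<And>x. F x = G *v x + \<xi> x"
    and C: "1 \<le> C"
    and k: "1 \<le> k"
    and c_min: "caa_argmin F x0 C k c"
    and p_feas: "poly_feasible C k p"
    and p_min: "\<And>q. poly_feasible C k q \<Longrightarrow> sup_on_interval \<rho> p \<le> sup_on_interval \<rho> q"
  shows "norm (F (caa_output F x0 k c) - caa_output F x0 k c)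
           \<le> (sup_on_interval \<rho> p + 3 * C * \<alpha> * real k) * norm (F x0 - x0)"
proof -
  define x where "x = caa_iter F x0"
  define r where "r i = x i - x (Suc i)" for i
  define g where "g = (\<lambda>v. G *v v)"
  define N where "N = norm (F x0 - x0)"
  define M where "M = sup_on_interval \<rho> p"
  have xS: "x (Suc i) = F (x i)" for i by (simp add: x_def caa_iter_def)
  have x0: "x 0 = x0" by (simp add: x_def caa_iter_def)
  have N0: "0 \<le> N" unfolding N_def by simp
  have rN: "norm (r 0) = N" unfolding r_def N_def xS x0 by (simp add: norm_minus_commute)
  have Flip: "norm (F a - F b) \<le> \<rho> * norm (a - b)" for a b
    using lipschitz_onD[OF F_lip, of a b] by (simp add: dist_norm)
  have xilip: "norm (\<xi> a - \<xi> b) \<le> \<alpha> * norm (a - b)" for a b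
    using lipschitz_onD[OF xi_lip, of a b] by (simp add: dist_norm)
  have r_le: "norm (r i) \<le> N" for i
  proof (induction i)
    case 0 then show ?case using rN by simp
  next
    case (Suc i)
    have "norm (r (Suc i)) = norm (F (x i) - F (x (Suc i)))" unfolding r_def xS[of "Suc i"] xS[of i] by simp
    also have "\<dots> \<le> \<rho> * norm (r i)" using Flip unfolding r_def xS by simp
    also have "\<dots> \<le> norm (r i)" using rho by (simp add: mult_left_le_one_le)
    finally show ?case using Suc by simp
  qed
  have xdist: "norm (x i - x0) \<le> real i * N" for i
  proof (induction i)
    case 0 then show ?case using x0 by simp
  next
    case (Suc i)
    have "x (Suc i) - x0 = (x i - x0) - r i" unfolding r_def by simp
    then have "norm (x (Suc i) - x0) \<le> norm (x i - x0) + norm (r i)"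
      by (metis norm_triangle_ineq4)
    then show ?case using Suc r_le[of i] by (simp add: algebra_simps)
  qed
  have lin: "linear g" unfolding g_def by (rule matrix_vector_mul_linear)
  have sa: "g a \<bullet> b = a \<bullet> g b" for a b
    unfolding g_def
    by (metis G_sym dot_lmul_matrix vector_transpose_matrix)
  have psd: "0 \<le> a \<bullet> g a" for a unfolding g_def by (rule G_psd)
  have gle: "a \<bullet> g a \<le> \<rho> * (a \<bullet> a)" for a unfolding g_def by (rule G_le)
  have gnorm: "norm (g v) \<le> norm v" for v
  proof -
    have "norm (polyop g [:0,1::real:] v) \<le> 1 * norm v"
      by (rule spectral_bound[OF lin sa psd gle, of "[:0,1::real:]" 1]) (use rho in auto)
    moreover have "polyop g [:0,1::real:] v = g v" by (simp add: polyop_def)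
    ultimately show ?thesis by simp
  qed
  have rrec: "r (Suc i) = g (r i) + (\<xi> (x i) - \<xi> (x (Suc i)))" for i
  proof -
    have "r (Suc i) = F (x i) - F (x (Suc i))" unfolding r_def xS[of "Suc i"] xS[of i] by simp
    also have "\<dots> = (g (x i) - g (x (Suc i))) + (\<xi> (x i) - \<xi> (x (Suc i)))"
      unfolding F_decomp g_def by simp
    also have "g (x i) - g (x (Suc i)) = g (r i)" unfolding r_def by (simp add: linear_diff[OF lin])
    finally show ?thesis .
  qed
  have rdev: "norm (r i - (g^^i) (r 0)) \<le> real i * \<alpha> * N" for i
  proof (induction i)
    case 0 then show ?case by simp
  next
    case (Suc i)
    have "r (Suc i) - (g^^Suc i) (r 0) = g (r i - (g^^i) (r 0)) + (\<xi> (x i) - \<xi> (x (Suc i)))"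
      unfolding rrec by (simp add: linear_diff[OF lin])
    then have "norm (r (Suc i) - (g^^Suc i) (r 0)) \<le> norm (g (r i - (g^^i) (r 0))) + norm (\<xi> (x i) - \<xi> (x (Suc i)))"
      by (metis norm_triangle_ineq)
    also have "\<dots> \<le> real i * \<alpha> * N + \<alpha> * N"
    proof (rule add_mono)
      show "norm (g (r i - (g^^i) (r 0))) \<le> real i * \<alpha> * N" using gnorm Suc order_trans by blast
      have "norm (\<xi> (x i) - \<xi> (x (Suc i))) \<le> \<alpha> * norm (r i)" using xilip unfolding r_def by blast
      also have "\<dots> \<le> \<alpha> * N" using r_le alpha by (simp add: mult_left_mono)
      finally show "norm (\<xi> (x i) - \<xi> (x (Suc i))) \<le> \<alpha> * N" .
    qed
    finally show ?case by (simp add: algebra_simps)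
  qed
  have pdeg: "degree p \<le> k" and p1: "poly p 1 = 1" and pl1: "poly_l1 p \<le> C"
    using p_feas unfolding poly_feasible_def by auto
  have cz: "degree p < i \<Longrightarrow> coeff p i = 0" for i by (simp add: coeff_eq_0)
  have l1k: "(\<Sum>i\<le>k. \<bar>coeff p i\<bar>) \<le> C"
    using pl1 sum_ext_deg[of p "\<lambda>i. \<bar>coeff p i\<bar>" k] cz pdeg unfolding poly_l1_def by simp
  have feas': "caa_feasible C k (coeff p)"
    unfolding caa_feasible_def
  proof
    have "(\<Sum>i\<le>k. coeff p i) = (\<Sum>i\<le>degree p. coeff p i)"
      using sum_ext_deg[of p "\<lambda>i. coeff p i" k] cz pdeg by simp
    also have "\<dots> = poly p 1" by (simp add: poly_altdef)
    finally show "(\<Sum>i\<le>k. coeff p i) = 1" using p1 by simp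
  qed (rule l1k)
  have Mb: "\<bar>poly p t\<bar> \<le> M" if "0 \<le> t" "t \<le> \<rho>" for t
  proof -
    have "compact ((\<lambda>x. \<bar>poly p x\<bar>) ` {0..\<rho>})"
      by (intro compact_continuous_image continuous_intros continuous_on_poly) auto
    then have "bdd_above ((\<lambda>x. \<bar>poly p x\<bar>) ` {0..\<rho>})"
      by (intro bounded_imp_bdd_above compact_imp_bounded)
    then show ?thesis unfolding M_def sup_on_interval_def
      by (rule cSUP_upper2) (use that in auto)
  qed
  have pG: "norm (polyop g p (r 0)) \<le> M * N"
    using spectral_bound[OF lin sa psd gle, of p M "r 0"] rho Mb rN by auto
  have resid: "caa_residual F x0 k d = (\<Sum>i\<le>k. d i *\<^sub>R r i)" for d
    unfolding caa_residual_def r_def x_def by simp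
  have Rp: "norm (caa_residual F x0 k (coeff p)) \<le> (M + C * real k * \<alpha>) * N"
  proof -
    have "polyop g p (r 0) = (\<Sum>i\<le>k. coeff p i *\<^sub>R (g^^i) (r 0))"
      unfolding polyop_def using sum_ext_deg[of p "\<lambda>i. coeff p i *\<^sub>R (g^^i) (r 0)" k] cz pdeg by simp
    then have "caa_residual F x0 k (coeff p) = polyop g p (r 0) + (\<Sum>i\<le>k. coeff p i *\<^sub>R (r i - (g^^i) (r 0)))"
      unfolding resid by (simp add: scaleR_diff_right sum_subtractf)
    then have "norm (caa_residual F x0 k (coeff p)) \<le> norm (polyop g p (r 0)) + norm (\<Sum>i\<le>k. coeff p i *\<^sub>R (r i - (g^^i) (r 0)))"
      by (metis norm_triangle_ineq)
    also have "\<dots> \<le> M * N + C * (real k * \<alpha> * N)"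
    proof (rule add_mono[OF pG wsum_bound[OF _ l1k]])
      fix i assume "i \<le> k"
      then have "real i * \<alpha> * N \<le> real k * \<alpha> * N" using alpha N0
        by (intro mult_right_mono) auto
      then show "norm (r i - (g^^i) (r 0)) \<le> real k * \<alpha> * N" using rdev order_trans by blast
    qed (use alpha N0 in simp)
    finally show ?thesis by (simp add: algebra_simps)
  qed
  have cfeas: "caa_feasible C k c" and cmin: "norm (caa_residual F x0 k c) \<le> norm (caa_residual F x0 k (coeff p))"
    using c_min feas' unfolding caa_argmin_def by auto
  have csum: "(\<Sum>i\<le>k. c i) = 1" and cl1: "(\<Sum>i\<le>k. \<bar>c i\<bar>) \<le> C"
    using cfeas unfolding caa_feasible_def by auto
  define xe where "xe = caa_output F x0 k c"
  have xe_def': "xe = (\<Sum>i\<le>k. c i *\<^sub>R x i)" unfolding xe_def caa_output_def x_def by simp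
  have Rc: "caa_residual F x0 k c = xe - g xe - (\<Sum>i\<le>k. c i *\<^sub>R \<xi> (x i))"
  proof -
    have "caa_residual F x0 k c = (\<Sum>i\<le>k. c i *\<^sub>R x i) - (\<Sum>i\<le>k. c i *\<^sub>R g (x i)) - (\<Sum>i\<le>k. c i *\<^sub>R \<xi> (x i))"
      unfolding resid r_def xS F_decomp g_def
      by (simp add: scaleR_diff_right scaleR_add_right sum_subtractf sum.distrib algebra_simps)
    moreover have "g xe = (\<Sum>i\<le>k. c i *\<^sub>R g (x i))"
      unfolding xe_def' by (simp add: linear_sum[OF lin] linear_scale[OF lin])
    ultimately show ?thesis unfolding xe_def' by simp
  qed
  define E where "E = \<xi> xe - (\<Sum>i\<le>k. c i *\<^sub>R \<xi> (x i))"
  have Fxe: "F xe - xe = E - caa_residual F x0 k c"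
    unfolding Rc E_def F_decomp g_def by simp
  have sum_c_const: "(\<Sum>i\<le>k. c i *\<^sub>R z) = z" for z :: "real^'n"
    using csum by (simp add: scaleR_sum_left[symmetric])
  have E_dec: "E = (\<xi> xe - \<xi> x0) - (\<Sum>i\<le>k. c i *\<^sub>R (\<xi> (x i) - \<xi> x0))"
    unfolding E_def by (simp add: scaleR_diff_right sum_subtractf sum_c_const)
  have xe0: "xe - x0 = (\<Sum>i\<le>k. c i *\<^sub>R (x i - x0))"
    unfolding xe_def' by (simp add: scaleR_diff_right sum_subtractf sum_c_const)
  have xk: "norm (x i - x0) \<le> real k * N" if "i \<le> k" for i
    using xdist[of i] that N0 by (meson mult_right_mono of_nat_mono order_trans)
  have nxe: "norm (xe - x0) \<le> C * (real k * N)"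
    unfolding xe0 by (rule wsum_bound[OF xk cl1]) (use N0 in auto)
  have E1: "norm (\<xi> xe - \<xi> x0) \<le> \<alpha> * (C * (real k * N))"
    using xilip[of xe x0] nxe alpha by (meson mult_left_mono order_trans)
  have E2: "norm (\<Sum>i\<le>k. c i *\<^sub>R (\<xi> (x i) - \<xi> x0)) \<le> C * (\<alpha> * (real k * N))"
  proof (rule wsum_bound[OF _ cl1])
    fix i assume "i \<le> k"
    then show "norm (\<xi> (x i) - \<xi> x0) \<le> \<alpha> * (real k * N)"
      using xilip[of "x i" x0] xk alpha by (meson mult_left_mono order_trans)
  qed (use alpha N0 in simp)
  have "norm E \<le> norm (\<xi> xe - \<xi> x0) + norm (\<Sum>i\<le>k. c i *\<^sub>R (\<xi> (x i) - \<xi> x0))"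
    unfolding E_dec by (rule norm_triangle_ineq4)
  then have nE: "norm E \<le> 2 * C * \<alpha> * real k * N" using E1 E2 by (simp add: algebra_simps)
  have "norm (F xe - xe) \<le> norm E + norm (caa_residual F x0 k c)"
    unfolding Fxe by (rule norm_triangle_ineq4)
  also have "\<dots> \<le> 2 * C * \<alpha> * real k * N + (M + C * real k * \<alpha>) * N"
    using nE cmin Rp by linarith
  also have "\<dots> = (M + 3 * C * \<alpha> * real k) * N" by (simp add: algebra_simps)
  finally show ?thesis unfolding xe_def M_def N_def .
qed

end
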